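(* For complex parameters $a,c$, \begin{align*} \sum_{n=0}^\infty \sum_{j=-n}^n (-1)^j \bigl(1-q^{2n+1}\bigr)q^{j^2-n} \frac{\bigl(q^2/a, q^2/c; q^2\bigr)_n (ac)^n}{\bigl(q^2 a, q^2 c; q^2\bigr)_n} =\frac{\bigl(q^2, ca; q^2\bigr)_\infty}{\bigl(q^2 a, q^2 c; q^2\bigr)_\infty}\sum_{n=0}^\infty \frac{\bigl(q^2/a, q^2/c; q^2\bigr)_n (ac/q)^n}{(-q; q)_{2n} \bigl(1+q^{2n+1}\bigr)}. \end{align*}
   Context: Throughout, $q$ is a complex number with $0<|q|<1$. For $x\in\mathbb{C}$ and base $p\in\{q,q^2\}$, $(x;p)_\infty=\prod_{k=0}^\infty(1-xp^k)$ and, for an integer $n\ge 0$, $(x;p)_n=\prod_{k=0}^{n-1}(1-xp^k)$; also $(x_1,\dots,x_m;p)_n=(x_1;p)_n\cdots(x_m;p)_n$ for $n$ an integer or $\infty$. *)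

theory Defs
  imports "HOL-Analysis.Analysis"
begin

definition qpoch :: "complex \<Rightarrow> complex \<Rightarrow> nat \<Rightarrow> complex" where
  "qpoch x p n = (\<Prod>k<n. (1 - x * p ^ k))"

definition qpoch_inf :: "complex \<Rightarrow> complex \<Rightarrow> complex" where
  "qpoch_inf x p = (\<Prod>k. (1 - x * p ^ k))"

end

theory Submission
  imports Defs
begin

lemma qpoch_0[simp]: "qpoch x p 0 = 1" by (simp add: qpoch_def)
lemma qpoch_Suc: "qpoch x p (Suc n) = qpoch x p n * (1 - x * p ^ n)"
  by (simp add: qpoch_def)

lemma qpoch_add: "qpoch x p (m + n) = qpoch x p m * qpoch (x * p ^ m) p n"
  by (induction n) (simp_all add: qpoch_Suc power_add mult_ac)

lemma qpoch_nonzero: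
  assumes "\<And>k. k < n \<Longrightarrow> x * p ^ k \<noteq> 1"
  shows "qpoch x p n \<noteq> 0"
  using assms unfolding qpoch_def by (auto simp: prod_zero_iff)

lemma qpoch_conv:
  fixes p x :: complex
  assumes "norm p < 1"
  shows "convergent_prod (\<lambda>k. 1 - x * p ^ k)"
proof -
  have "summable (\<lambda>k. norm x * norm p ^ k)"
    using assms by (intro summable_mult summable_geometric) auto
  hence "summable (\<lambda>k. norm ((1 - x * p ^ k) - 1))"
    by (simp add: norm_mult norm_power)
  thus ?thesis
    by (intro abs_convergent_prod_imp_convergent_prod summable_imp_abs_convergent_prod)
qed

lemma qpoch_LIMSEQ:
  assumes "norm p < 1"
  shows "(\<lambda>n. qpoch x p n) \<longlonglongrightarrow> qpoch_inf x p"
proof -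
  have "(\<lambda>n. \<Prod>i\<le>n. 1 - x * p ^ i) \<longlonglongrightarrow> qpoch_inf x p"
    unfolding qpoch_inf_def by (rule convergent_prod_LIMSEQ[OF qpoch_conv[OF assms]])
  hence "(\<lambda>n. qpoch x p (Suc n)) \<longlonglongrightarrow> qpoch_inf x p"
    by (simp add: qpoch_def lessThan_Suc_atMost)
  thus ?thesis by (rule LIMSEQ_imp_Suc)
qed

lemma qpoch_inf_nonzero:
  assumes "norm p < 1" "\<And>k. x * p ^ k \<noteq> 1"
  shows "qpoch_inf x p \<noteq> 0"
  unfolding qpoch_inf_def using assms
  by (intro prodinf_nonzero qpoch_conv) auto

lemma qpoch_inf_split:
  assumes "norm p < 1"
  shows "qpoch_inf x p = qpoch x p m * qpoch_inf (x * p ^ m) p"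
proof -
  have "(\<lambda>n. qpoch x p (m + n)) \<longlonglongrightarrow> qpoch_inf x p"
    using LIMSEQ_ignore_initial_segment[OF qpoch_LIMSEQ[OF assms, of x], of m] by (simp add: add.commute)
  moreover have "(\<lambda>n. qpoch x p (m + n)) \<longlonglongrightarrow> qpoch x p m * qpoch_inf (x * p ^ m) p"
    unfolding qpoch_add by (intro tendsto_mult tendsto_const qpoch_LIMSEQ assms)
  ultimately show ?thesis by (rule LIMSEQ_unique)
qed

lemma qpoch_lower_bound:
  fixes p x :: complex
  assumes "norm p < 1" "\<And>k. x * p ^ k \<noteq> 1"
  shows "\<exists>d>0. \<forall>n. d \<le> norm (qpoch x p n)"
proof -
  have lim: "(\<lambda>n. norm (qpoch x p n)) \<longlonglongrightarrow> norm (qpoch_inf x p)"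
    by (intro tendsto_norm qpoch_LIMSEQ assms)
  have pos: "norm (qpoch_inf x p) > 0" using qpoch_inf_nonzero[OF assms] by simp
  then obtain N where N: "\<And>n. n \<ge> N \<Longrightarrow> norm (qpoch x p n) > norm (qpoch_inf x p) / 2"
    using lim unfolding tendsto_iff
    by (metis (no_types, lifting) order_tendstoD(1) eventually_at_top_linorder half_gt_zero less_add_same_cancel2 field_sum_of_halves lim)
  define d where "d = min (norm (qpoch_inf x p) / 2) (Min ((\<lambda>n. norm (qpoch x p n)) ` {..N}))"
  have "d > 0" unfolding d_def using pos qpoch_nonzero[of n x p for n] assms(2)
    by (auto simp: Min_gr_iff)
  moreover have "d \<le> norm (qpoch x p n)" for n
  proof (cases "n \<le> N")
    case True thus ?thesis unfolding d_def by (intro min.coboundedI2 Min_le) auto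
  next
    case False thus ?thesis using N[of n] unfolding d_def by linarith
  qed
  ultimately show ?thesis by blast
qed

lemma qpoch_upper_bound:
  fixes p x :: complex
  assumes "norm p < 1"
  shows "\<exists>M. \<forall>n. norm (qpoch x p n) \<le> M"
proof -
  have "Bseq (\<lambda>n. qpoch x p n)"
    using qpoch_LIMSEQ[OF assms] by (rule convergent_imp_Bseq[OF convergentI])
  thus ?thesis unfolding Bseq_def by (metis less_imp_le)
qed

definition gt :: "complex \<Rightarrow> complex \<Rightarrow> complex \<Rightarrow> complex \<Rightarrow> nat \<Rightarrow> complex" where
  "gt A B C p m = qpoch A p m * qpoch B p m / (qpoch p p m * qpoch C p m) * (C / (A * B)) ^ m"

definition qg_ok :: "complex \<Rightarrow> complex \<Rightarrow> complex \<Rightarrow> complex \<Rightarrow> bool" where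
  "qg_ok A B C p \<longleftrightarrow> norm p < 1 \<and> p \<noteq> 0 \<and> A \<noteq> 0 \<and> B \<noteq> 0 \<and> norm (C / (A * B)) < 1 \<and> (\<forall>k. C * p ^ k \<noteq> 1)"

lemma pow_ne1:
  fixes p :: complex
  assumes "norm p < 1" "p \<noteq> 0"
  shows "p * p ^ k \<noteq> 1"
proof -
  have "norm (p * p ^ k) = norm p ^ Suc k" by (simp add: norm_mult norm_power)
  also have "\<dots> < 1" using assms by (intro power_Suc_less_one) auto
  finally show ?thesis by auto
qed

lemma qpoch_pp_nonzero: "norm p < 1 \<Longrightarrow> p \<noteq> 0 \<Longrightarrow> qpoch p p m \<noteq> 0"
  by (intro qpoch_nonzero pow_ne1)

lemma qg_ok_shift:
  assumes "qg_ok A B C p"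
  shows "qg_ok A B (C * p ^ K) p"
proof -
  have "norm (C * p ^ K / (A * B)) = norm (C / (A * B)) * norm p ^ K"
    by (simp add: norm_mult norm_divide norm_power)
  also have "\<dots> \<le> norm (C / (A * B))" using assms unfolding qg_ok_def
    by (simp add: mult_left_le power_le_one)
  finally have "norm (C * p ^ K / (A * B)) < 1" using assms unfolding qg_ok_def by simp
  moreover have "C * p ^ K * p ^ k \<noteq> 1" for k
    using assms unfolding qg_ok_def by (metis mult.assoc power_add)
  ultimately show ?thesis using assms unfolding qg_ok_def by auto
qed

lemma gt_0[simp]: "gt A B C p 0 = 1" by (simp add: gt_def)

lemma gt_Suc:
  assumes "qg_ok A B C p"
  shows "gt A B C p (Suc m) = gt A B C p m * ((1 - A * p ^ m) * (1 - B * p ^ m) * (C / (A * B)))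
           / ((1 - p * p ^ m) * (1 - C * p ^ m))"
proof -
  have h1: "1 - p * p ^ m \<noteq> 0" using pow_ne1[of p m] assms unfolding qg_ok_def by auto
  have h2: "1 - C * p ^ m \<noteq> 0" using assms unfolding qg_ok_def by auto
  show ?thesis unfolding gt_def qpoch_Suc using h1 h2 by (simp add: field_simps)
qed

lemma gt_shift:
  assumes "qg_ok A B C p"
  shows "gt A B (C * p) p m = gt A B C p m * (1 - C) * p ^ m / (1 - C * p ^ m)"
proof -
  have q1: "qpoch (C * p) p m * (1 - C) = qpoch C p m * (1 - C * p ^ m)"
    using qpoch_add[of C p 1 m] qpoch_add[of C p m 1] by (simp add: qpoch_Suc mult_ac)
  have h2: "1 - C * p ^ m \<noteq> 0" "1 - C \<noteq> 0" using assms unfolding qg_ok_def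
    by (auto, metis power_0 mult_1_right)
  have h3: "qpoch C p m \<noteq> 0" using assms unfolding qg_ok_def by (intro qpoch_nonzero) auto
  have h4: "qpoch (C * p) p m \<noteq> 0" using q1 h2 h3 by auto
  have h5: "qpoch p p m \<noteq> 0" using assms unfolding qg_ok_def by (intro qpoch_pp_nonzero) auto
  have qq: "qpoch (C * p) p m = qpoch C p m * (1 - C * p ^ m) / (1 - C)" using q1 h2
    by (simp add: field_simps)
  show ?thesis unfolding gt_def qq using h2 h3 h5
    by (simp add: field_simps power_mult_distrib)
qed

lemma gt_bound:
  assumes "qg_ok A B C p"
  shows "\<exists>E. \<forall>K m. norm (gt A B (C * p ^ K) p m) \<le> E * norm (C / (A * B)) ^ m * norm p ^ (K * m)"
proof -
  have p1: "norm p < 1" "p \<noteq> 0" and Cne: "\<And>k. C * p ^ k \<noteq> 1"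
    using assms unfolding qg_ok_def by auto
  obtain MA where MA: "\<And>n. norm (qpoch A p n) \<le> MA" using qpoch_upper_bound[OF p1(1)] by blast
  obtain MB where MB: "\<And>n. norm (qpoch B p n) \<le> MB" using qpoch_upper_bound[OF p1(1)] by blast
  obtain MC where MC: "\<And>n. norm (qpoch C p n) \<le> MC" using qpoch_upper_bound[OF p1(1)] by blast
  obtain dp where dp: "dp > 0" "\<And>n. dp \<le> norm (qpoch p p n)"
    using qpoch_lower_bound[OF p1(1), of p] pow_ne1[OF p1] by blast
  obtain dC where dC: "dC > 0" "\<And>n. dC \<le> norm (qpoch C p n)"
    using qpoch_lower_bound[OF p1(1), of C] Cne by blast
  have MA0: "0 \<le> MA" using MA[of 0] by simp
  have MB0: "0 \<le> MB" using MB[of 0] by simp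
  have MC0: "0 \<le> MC" using MC[of 0] by simp
  define E where "E = MA * MB * MC / (dp * dC)"
  have "norm (gt A B (C * p ^ K) p m) \<le> E * norm (C / (A * B)) ^ m * norm p ^ (K * m)" for K m
  proof -
    have split: "qpoch C p (K + m) = qpoch C p K * qpoch (C * p ^ K) p m" by (rule qpoch_add)
    have nzK: "qpoch C p K \<noteq> 0" using Cne by (intro qpoch_nonzero) auto
    have nzKm: "qpoch C p (K + m) \<noteq> 0" using Cne by (intro qpoch_nonzero) auto
    have nzm: "qpoch (C * p ^ K) p m \<noteq> 0" using split nzKm by auto
    have e1: "gt A B (C * p ^ K) p m = qpoch A p m * qpoch B p m * qpoch C p K
               / (qpoch p p m * qpoch C p (K + m)) * (C / (A * B)) ^ m * (p ^ K) ^ m"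
      unfolding gt_def split using nzK nzm
      by (simp add: field_simps power_mult_distrib)
    have "norm (gt A B (C * p ^ K) p m) = norm (qpoch A p m) * norm (qpoch B p m) * norm (qpoch C p K)
               / (norm (qpoch p p m) * norm (qpoch C p (K + m))) * norm (C / (A * B)) ^ m * norm p ^ (K * m)"
      unfolding e1 by (simp add: norm_mult norm_divide norm_power power_mult)
    also have "\<dots> \<le> E * norm (C / (A * B)) ^ m * norm p ^ (K * m)"
    unfolding E_def proof (intro mult_right_mono frac_le mult_mono)
    qed (use MA MB MC dp dC MA0 MB0 MC0 in \<open>auto intro: mult_nonneg_nonneg mult_pos_pos\<close>)
    finally show ?thesis .
  qed
  thus ?thesis by blast
qed

definition qgs :: "complex \<Rightarrow> complex \<Rightarrow> complex \<Rightarrow> complex \<Rightarrow> complex" where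
  "qgs A B C p = suminf (gt A B C p)"

lemma alg:
  fixes A B C p w T :: complex
  assumes "A \<noteq> 0" "B \<noteq> 0" "1 - p * w \<noteq> 0" "1 - C * w \<noteq> 0"
  shows "(1 - C) * (1 - C / (A * B)) * T - (1 - C / A) * (1 - C / B) * (T * (1 - C) * w / (1 - C * w))
    = (1 - C) * (1 - w) * T - (1 - C) * (1 - p * w) * (T * ((1 - A * w) * (1 - B * w) * (C / (A * B)))
       / ((1 - p * w) * (1 - C * w)))"
proof -
  let ?D = "A * B * (1 - C * w)"
  have D: "?D \<noteq> 0" using assms by auto
  have l: "(1 - C) * (1 - C / (A * B)) * T - (1 - C / A) * (1 - C / B) * (T * (1 - C) * w / (1 - C * w))
      = (1 - C) * T * ((A * B - C) * (1 - C * w) - (A - C) * (B - C) * w) / ?D"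
    using assms by (simp add: field_simps)
  have r1: "(1 - p * w) * (T * ((1 - A * w) * (1 - B * w) * (C / (A * B))) / ((1 - p * w) * (1 - C * w)))
      = T * ((1 - A * w) * (1 - B * w) * (C / (A * B))) / (1 - C * w)"
    using assms by (simp add: ac_simps)
  have r: "(1 - C) * (1 - w) * T - (1 - C) * (T * ((1 - A * w) * (1 - B * w) * (C / (A * B))) / (1 - C * w))
      = (1 - C) * T * (A * B * (1 - w) * (1 - C * w) - (1 - A * w) * (1 - B * w) * C) / ?D"
    using assms by (simp add: field_simps)
  have pe: "(A * B - C) * (1 - C * w) - (A - C) * (B - C) * w = A * B * (1 - w) * (1 - C * w) - (1 - A * w) * (1 - B * w) * C"
    by algebra
  show ?thesis unfolding mult.assoc[of "1-C" "1 - p * w"] r1 using l r pe by (simp add: mult.assoc)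
qed

lemma gt_summable_norm:
  assumes "qg_ok A B C p"
  shows "summable (\<lambda>m. norm (gt A B C p m))"
proof -
  obtain E where E: "\<And>K m. norm (gt A B (C * p ^ K) p m) \<le> E * norm (C / (A * B)) ^ m * norm p ^ (K * m)"
    using gt_bound[OF assms] by blast
  have "summable (\<lambda>m. E * norm (C / (A * B)) ^ m)"
    using assms unfolding qg_ok_def by (intro summable_mult summable_geometric) auto
  moreover have "norm (norm (gt A B C p m)) \<le> E * norm (C / (A * B)) ^ m" for m
    using E[of 0 m] by simp
  ultimately show ?thesis by (rule summable_comparison_test'[where N=0])
qed

lemma gt_summable: "qg_ok A B C p \<Longrightarrow> summable (gt A B C p)"
  using gt_summable_norm summable_norm_cancel by blast

lemma qgs_fe:
  assumes ok: "qg_ok A B C p"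
  shows "(1 - C) * (1 - C / (A * B)) * qgs A B C p = (1 - C / A) * (1 - C / B) * qgs A B (C * p) p"
proof -
  have okp: "qg_ok A B (C * p) p" using qg_ok_shift[OF ok, of 1] by simp
  have p1: "norm p < 1" "p \<noteq> 0" "A \<noteq> 0" "B \<noteq> 0" and Cne: "\<And>k. C * p ^ k \<noteq> 1"
    using ok unfolding qg_ok_def by auto
  define G where "G m = (1 - C) * (1 - p ^ m) * gt A B C p m" for m
  have "(\<lambda>m. (1 - C) * (1 - p ^ m) * gt A B C p m) \<longlonglongrightarrow> (1 - C) * (1 - 0) * 0"
    by (intro tendsto_mult tendsto_const tendsto_diff LIMSEQ_power_zero
        summable_LIMSEQ_zero gt_summable ok p1(1))
  hence G0: "G \<longlonglongrightarrow> 0" unfolding G_def by simp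
  have tel: "(\<lambda>m. G m - G (Suc m)) sums 0"
    using telescope_sums'[OF G0] by (simp add: G_def)
  have tm: "(1 - C) * (1 - C / (A * B)) * gt A B C p m - (1 - C / A) * (1 - C / B) * gt A B (C * p) p m
      = G m - G (Suc m)" for m
  proof -
    have h1: "1 - p * p ^ m \<noteq> 0" using pow_ne1[OF p1(1,2), of m] by auto
    have h2: "1 - C * p ^ m \<noteq> 0" using Cne[of m] by auto
    show ?thesis unfolding G_def gt_Suc[OF ok] gt_shift[OF ok] power_Suc
      by (rule alg) (use h1 h2 p1 in auto)
  qed
  have "(\<lambda>m. (1 - C) * (1 - C / (A * B)) * gt A B C p m - (1 - C / A) * (1 - C / B) * gt A B (C * p) p m)
        sums ((1 - C) * (1 - C / (A * B)) * qgs A B C p - (1 - C / A) * (1 - C / B) * qgs A B (C * p) p)"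
    unfolding qgs_def
    by (intro sums_diff sums_mult summable_sums gt_summable ok okp)
  with tel have "(1 - C) * (1 - C / (A * B)) * qgs A B C p - (1 - C / A) * (1 - C / B) * qgs A B (C * p) p = 0"
    unfolding tm using sums_unique2 by blast
  thus ?thesis by simp
qed

lemma qgs_step:
  assumes ok: "qg_ok A B C p"
  shows "qgs A B C p = (1 - C / A) * (1 - C / B) / ((1 - C) * (1 - C / (A * B))) * qgs A B (C * p) p"
proof -
  have h1: "1 - C \<noteq> 0" using ok unfolding qg_ok_def by (metis power_0 mult_1_right right_minus_eq)
  have h2: "1 - C / (A * B) \<noteq> 0" using ok unfolding qg_ok_def by auto
  define X where "X = (1 - C) * (1 - C / (A * B))"
  have X: "X \<noteq> 0" using h1 h2 unfolding X_def by simp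
  have "qgs A B C p = (X * qgs A B C p) / X" using X by simp
  also have "\<dots> = ((1 - C / A) * (1 - C / B) * qgs A B (C * p) p) / X"
    unfolding X_def qgs_fe[OF ok] ..
  finally show ?thesis unfolding X_def by simp
qed

lemma qgs_iter:
  assumes ok: "qg_ok A B C p"
  shows "qgs A B C p = qpoch (C / A) p K * qpoch (C / B) p K / (qpoch C p K * qpoch (C / (A * B)) p K)
           * qgs A B (C * p ^ K) p"
proof (induction K)
  case 0 thus ?case by simp
next
  case (Suc K)
  have okK: "qg_ok A B (C * p ^ K) p" by (rule qg_ok_shift[OF ok])
  have pe: "C * p ^ Suc K = C * p ^ K * p" by (simp add: mult_ac)
  have st: "qgs A B (C * p ^ K) p = (1 - C * p ^ K / A) * (1 - C * p ^ K / B)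
        / ((1 - C * p ^ K) * (1 - C * p ^ K / (A * B))) * qgs A B (C * p ^ Suc K) p"
    unfolding pe by (rule qgs_step[OF okK])
  have Cne: "\<And>k. C * p ^ k \<noteq> 1" and z: "norm (C / (A * B)) < 1" and AB: "A \<noteq> 0" "B \<noteq> 0"
    using ok unfolding qg_ok_def by auto
  have n1: "qpoch C p K \<noteq> 0" using Cne by (intro qpoch_nonzero) auto
  have n2: "1 - C * p ^ K \<noteq> 0" using Cne[of K] by auto
  have n3: "1 - C * p ^ K / (A * B) \<noteq> 0"
    using qg_ok_shift[OF ok, of K] unfolding qg_ok_def by auto
  have zne: "C / (A * B) * p ^ k \<noteq> 1" for k
    using qg_ok_shift[OF ok, of k] unfolding qg_ok_def by auto
  have n4: "qpoch (C / (A * B)) p K \<noteq> 0" using zne by (intro qpoch_nonzero) auto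
  have e1: "C / A * p ^ K = C * p ^ K / A" "C / B * p ^ K = C * p ^ K / B"
     "C / (A * B) * p ^ K = C * p ^ K / (A * B)" by simp_all
  show ?case unfolding Suc st qpoch_Suc e1 using n1 n2 n3 n4 by (simp add: field_simps)
qed

lemma qgs_tail:
  assumes ok: "qg_ok A B C p"
  shows "(\<lambda>K. qgs A B (C * p ^ K) p) \<longlonglongrightarrow> 1"
proof -
  obtain E where E: "\<And>K m. norm (gt A B (C * p ^ K) p m) \<le> E * norm (C / (A * B)) ^ m * norm p ^ (K * m)"
    using gt_bound[OF ok] by blast
  define z where "z = norm (C / (A * B))"
  have z: "0 \<le> z" "z < 1" using ok unfolding qg_ok_def z_def by auto
  have p1: "norm p < 1" using ok unfolding qg_ok_def by auto
  have E0: "0 \<le> E" using E[of 0 0] by simp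
  have bnd: "norm (qgs A B (C * p ^ K) p - 1) \<le> E * z / (1 - z) * norm p ^ K" for K
  proof -
    have okK: "qg_ok A B (C * p ^ K) p" by (rule qg_ok_shift[OF ok])
    have "qgs A B (C * p ^ K) p - 1 = (\<Sum>m. gt A B (C * p ^ K) p (Suc m))"
      unfolding qgs_def using suminf_split_head[OF gt_summable[OF okK]] by simp
    also have "norm \<dots> \<le> (\<Sum>m. norm (gt A B (C * p ^ K) p (Suc m)))"
      by (rule summable_norm) (use summable_ignore_initial_segment[OF gt_summable_norm[OF okK], of 1] in simp)
    also have "\<dots> \<le> (\<Sum>m. E * z * norm p ^ K * z ^ m)"
    proof (rule suminf_le)
      fix m
      have "norm (gt A B (C * p ^ K) p (Suc m)) \<le> E * z ^ Suc m * norm p ^ (K * Suc m)"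
        using E[of K "Suc m"] unfolding z_def .
      also have "\<dots> \<le> E * z ^ Suc m * norm p ^ K"
      proof -
        have "norm p ^ (K * Suc m) \<le> norm p ^ K"
          using p1 by (intro power_decreasing) auto
        moreover have "0 \<le> E * z ^ Suc m"
          using E0 z by simp
        ultimately show ?thesis by (intro mult_left_mono) auto
      qed
      finally show "norm (gt A B (C * p ^ K) p (Suc m)) \<le> E * z * norm p ^ K * z ^ m"
        by (simp add: mult_ac)
    next
      show "summable (\<lambda>m. norm (gt A B (C * p ^ K) p (Suc m)))"
        using summable_ignore_initial_segment[OF gt_summable_norm[OF okK], of 1] by simp
      show "summable (\<lambda>m. E * z * norm p ^ K * z ^ m)"
        using z by (intro summable_mult summable_geometric) auto
    qed
    also have "\<dots> = E * z * norm p ^ K / (1 - z)"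
    proof -
      have "(\<lambda>m. E * z * norm p ^ K * z ^ m) sums (E * z * norm p ^ K * (1 / (1 - z)))"
        using z by (intro sums_mult geometric_sums) auto
      thus ?thesis by (simp add: sums_iff)
    qed
    finally show ?thesis by simp
  qed
  have "(\<lambda>K. E * z / (1 - z) * norm p ^ K) \<longlonglongrightarrow> E * z / (1 - z) * 0"
    using p1 by (intro tendsto_mult tendsto_const LIMSEQ_power_zero) auto
  hence g0: "(\<lambda>K. E * z / (1 - z) * norm p ^ K) \<longlonglongrightarrow> 0" by (simp only: mult_zero_right)
  have "(\<lambda>K. qgs A B (C * p ^ K) p - 1) \<longlonglongrightarrow> 0"
    by (rule Lim_null_comparison[OF always_eventually g0]) (use bnd in blast)
  hence "(\<lambda>K. (qgs A B (C * p ^ K) p - 1) + 1) \<longlonglongrightarrow> 0 + 1"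
    by (intro tendsto_add tendsto_const)
  thus ?thesis by simp
qed

theorem qgauss:
  assumes ok: "qg_ok A B C p"
  shows "qgs A B C p = qpoch_inf (C / A) p * qpoch_inf (C / B) p / (qpoch_inf C p * qpoch_inf (C / (A * B)) p)"
proof -
  have p1: "norm p < 1" and Cne: "\<And>k. C * p ^ k \<noteq> 1" and z: "norm (C / (A * B)) < 1"
    using ok unfolding qg_ok_def by auto
  have n1: "qpoch_inf C p \<noteq> 0" by (rule qpoch_inf_nonzero[OF p1 Cne])
  have zne: "C / (A * B) * p ^ k \<noteq> 1" for k
    using qg_ok_shift[OF ok, of k] unfolding qg_ok_def by auto
  have n2: "qpoch_inf (C / (A * B)) p \<noteq> 0" by (rule qpoch_inf_nonzero[OF p1 zne])
  have "(\<lambda>K. qpoch (C / A) p K * qpoch (C / B) p K / (qpoch C p K * qpoch (C / (A * B)) p K)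
           * qgs A B (C * p ^ K) p) \<longlonglongrightarrow>
        qpoch_inf (C / A) p * qpoch_inf (C / B) p / (qpoch_inf C p * qpoch_inf (C / (A * B)) p) * 1"
  proof (rule tendsto_mult)
    show "(\<lambda>K. qgs A B (C * p ^ K) p) \<longlonglongrightarrow> 1" by (rule qgs_tail[OF ok])
    show "(\<lambda>K. qpoch (C / A) p K * qpoch (C / B) p K / (qpoch C p K * qpoch (C / (A * B)) p K)) \<longlonglongrightarrow>
        qpoch_inf (C / A) p * qpoch_inf (C / B) p / (qpoch_inf C p * qpoch_inf (C / (A * B)) p)"
      using n1 n2 by (intro tendsto_divide tendsto_mult qpoch_LIMSEQ[OF p1]) auto
  qed
  also have "(\<lambda>K. qpoch (C / A) p K * qpoch (C / B) p K / (qpoch C p K * qpoch (C / (A * B)) p K)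
           * qgs A B (C * p ^ K) p) = (\<lambda>K. qgs A B C p)"
    by (rule ext, rule qgs_iter[OF ok, symmetric])
  finally have "(\<lambda>K. qgs A B C p) \<longlonglongrightarrow>
        qpoch_inf (C / A) p * qpoch_inf (C / B) p / (qpoch_inf C p * qpoch_inf (C / (A * B)) p) * 1" .
  thus ?thesis by (simp only: LIMSEQ_const_iff mult_1_right)
qed

definition fth :: "complex \<Rightarrow> int \<Rightarrow> complex" where
  "fth q j = (-1) powi j * q powi (j^2)"

definition St :: "complex \<Rightarrow> int \<Rightarrow> complex" where
  "St q m = sum (fth q) {-m..m} - sum (fth q) {m+1..-m-1}"

definition qb :: "complex \<Rightarrow> nat \<Rightarrow> nat \<Rightarrow> complex" where
  "qb q N k = (if k \<le> N then qpoch (q^2) (q^2) N / (qpoch (q^2) (q^2) k * qpoch (q^2) (q^2) (N - k)) else 0)"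

definition Zs :: "complex \<Rightarrow> nat \<Rightarrow> int \<Rightarrow> complex" where
  "Zs q N m = (\<Sum>k\<le>N. qb q N k * q ^ k * St q (m - int k))"

lemma sum_atMost_flip: "sum g {..(N::nat)} = sum (\<lambda>i. g (N - i)) {..N}"
  by (subst atLeast0AtMost[symmetric], subst sum.atLeastAtMost_rev) (simp add: atLeast0AtMost)

lemma St_neg: "St q (-1 - m) = - St q m"
proof -
  have s1: "{-(-1-m)..-1-m} = {m+1..-m-1}" by auto
  have s2: "{-1-m+1..-(-1-m)-1} = {-m..m}" by auto
  show ?thesis unfolding St_def s1 s2 by simp
qed

lemma fth_even: "fth q (-j) = fth q j"
  unfolding fth_def by (simp add: power_int_minus_one_minus)

lemma St_0: "St q 0 = 1" by (simp add: St_def fth_def)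

lemma sum_sym_step:
  fixes m :: int
  assumes "0 \<le> m"
  shows "sum f {-(m+1)..m+1} = sum f {-m..m} + f (m+1) + f (-(m+1))"
proof -
  have "{-(m+1)..m+1} = insert (m+1) (insert (-(m+1)) {-m..m})" using assms by auto
  thus ?thesis using assms by (simp add: algebra_simps)
qed

lemma St_diff_pos:
  fixes m :: int
  assumes "1 \<le> m"
  shows "St q m - St q (m - 1) = 2 * fth q m"
proof -
  have e1: "{m + 1..- m - 1} = {}" "{m - 1 + 1..- (m - 1) - 1} = {}" using assms by auto
  have "sum (fth q) {-m..m} = sum (fth q) {-(m-1)..m-1} + fth q m + fth q (-m)"
    using sum_sym_step[of "m-1" "fth q"] assms by simp
  thus ?thesis unfolding St_def e1 fth_even by simp
qed

lemma St_diff: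
  fixes m :: int
  shows "St q m - St q (m - 1) = 2 * fth q m"
proof (cases "1 \<le> m")
  case True thus ?thesis by (rule St_diff_pos)
next
  case False
  show ?thesis
  proof (cases "m = 0")
    case True
    have "St q (-1) = - St q 0" using St_neg[of q 0] by simp
    thus ?thesis using True by (simp add: St_0 fth_def)
  next
    case False
    define m' where "m' = -m"
    have m': "1 \<le> m'" using False \<open>\<not> 1 \<le> m\<close> unfolding m'_def by simp
    have a: "St q m = - St q (m' - 1)" using St_neg[of q "m' - 1"] unfolding m'_def by simp
    have b: "St q (m - 1) = - St q m'" using St_neg[of q m'] unfolding m'_def by simp
    have "St q m - St q (m - 1) = St q m' - St q (m' - 1)" unfolding a b by simp
    also have "\<dots> = 2 * fth q m'" by (rule St_diff_pos[OF m'])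
    also have "fth q m' = fth q m" unfolding m'_def by (rule fth_even)
    finally show ?thesis .
  qed
qed

context
  fixes q :: complex
  assumes q1: "norm q < 1" and q0: "q \<noteq> 0"
begin

lemma P_nz: "qpoch (q^2) (q^2) k \<noteq> 0"
proof -
  have "norm (q^2) < 1" using q1 by (simp add: norm_power power_less_one_iff)
  thus ?thesis using q0 by (intro qpoch_pp_nonzero) auto
qed

lemma qb_0: "qb q N 0 = 1" unfolding qb_def using P_nz by simp
lemma qb_N: "qb q N N = 1" unfolding qb_def using P_nz by simp
lemma qb_gt: "N < k \<Longrightarrow> qb q N k = 0" unfolding qb_def by simp
lemma qb_sym: "k \<le> N \<Longrightarrow> qb q N (N - k) = qb q N k" unfolding qb_def by (simp add: mult.commute)

lemma pascal_alg:
  fixes PN Pk P' a b c d :: complex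
  assumes "Pk \<noteq> 0" "P' \<noteq> 0" "b \<noteq> 0" "d \<noteq> 0" "a = d + c * b"
  shows "PN * a / (Pk * b * (P' * d)) = PN / (Pk * b * P') + c * (PN / (Pk * (P' * d)))"
  using assms by (simp add: field_simps)

lemma qb_pascal:
  assumes "k \<le> N"
  shows "qb q (Suc N) (Suc k) = qb q N (Suc k) + q ^ (2 * (N - k)) * qb q N k"
proof (cases "k = N")
  case True thus ?thesis by (simp add: qb_N qb_gt)
next
  case False
  hence kN: "k < N" using assms by simp
  define P where "P = qpoch (q^2) (q^2)"
  have Pnz: "P j \<noteq> 0" for j unfolding P_def by (rule P_nz)
  have PS: "P (Suc j) = P j * (1 - q^2 * (q^2)^j)" for j unfolding P_def by (rule qpoch_Suc)
  have d1: "N - k = Suc (N - Suc k)" using kN by simp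
  have l: "qb q (Suc N) (Suc k) = P (Suc N) / (P (Suc k) * P (N - k))"
    unfolding qb_def P_def using kN by simp
  have r1: "qb q N (Suc k) = P N / (P (Suc k) * P (N - Suc k))" unfolding qb_def P_def using kN by simp
  have r2: "qb q N k = P N / (P k * P (N - k))" unfolding qb_def P_def using kN by simp
  have key: "(1 - q^2 * (q^2)^N) = (1 - q^2 * (q^2)^(N - Suc k)) + q ^ (2 * (N - k)) * (1 - q^2 * (q^2)^k)"
  proof -
    have "q^2 * (q^2)^(N - Suc k) = q ^ (2 * (N - k))"
      using kN by (simp add: power_mult[symmetric] power_add[symmetric] d1)
    moreover have "q ^ (2 * (N - k)) * (q^2 * (q^2)^k) = q^2 * (q^2)^N"
      using kN by (simp add: power_mult[symmetric] power_add[symmetric]) (simp add: algebra_simps)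
    ultimately show ?thesis by (simp add: algebra_simps)
  qed
  have nz: "1 - q^2 * (q^2)^j \<noteq> 0" for j using Pnz[of "Suc j"] unfolding PS by auto
  have PNk: "P (N - k) = P (N - Suc k) * (1 - q^2 * (q^2)^(N - Suc k))" unfolding d1 PS ..
  show ?thesis unfolding l r1 r2 PNk PS
    by (rule pascal_alg[OF Pnz Pnz nz nz key])
qed

end

lemma sum_split_add: "sum g {..<(a::nat) + b} = sum g {..<a} + sum (\<lambda>i. g (a + i)) {..<b}"
  by (induction b) (simp_all add: add_ac)

lemma qq2: "qpoch q q N * qpoch (-q) q N = qpoch (q^2) (q^2) N"
proof (induction N)
  case 0 thus ?case by simp
next
  case (Suc N)
  have "(1 - q * q ^ N) * (1 - (-q) * q ^ N) = 1 - q^2 * (q^2)^N"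
    by (simp add: algebra_simps power2_eq_square power_mult_distrib)
  thus ?case using Suc by (simp add: qpoch_Suc) (metis (no_types, lifting) mult.assoc mult.left_commute)
qed

context
  fixes q :: complex
  assumes q1: "norm q < 1" and q0: "q \<noteq> 0"
begin

lemma rothe: "(\<Sum>k\<le>N. qb q N k * ((-1)^k * q^(k*(k-1)) * z^k)) = qpoch z (q^2) N"
proof (induction N)
  case 0 thus ?case by (simp add: qb_0[OF q1 q0])
next
  case (Suc N)
  define a where "a k = (-1)^k * q^(k*(k-1)) * z^k" for k
  have IH: "(\<Sum>k\<le>N. qb q N k * a k) = qpoch z (q^2) N" using Suc unfolding a_def .
  have ak: "q ^ (2 * (N - k)) * a (Suc k) = - (z * q ^ (2 * N)) * a k" if "k \<le> N" for k
  proof -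
    have e1: "q ^ (Suc k * k) = q ^ (k * (k - 1)) * q ^ (2 * k)"
    proof -
      have "Suc k * k = k * (k - 1) + 2 * k" by (cases k) (auto simp: algebra_simps)
      thus ?thesis by (simp only: power_add[symmetric])
    qed
    have F: "q ^ (2 * N) = q ^ (2 * (N - k)) * q ^ (2 * k)"
    proof -
      have "2 * N = 2 * (N - k) + 2 * k" using that by simp
      thus ?thesis by (simp only: power_add[symmetric])
    qed
    have a1: "a (Suc k) = (-1)^(Suc k) * q ^ (Suc k * k) * z ^ Suc k" unfolding a_def by simp
    show ?thesis unfolding a1 e1 F unfolding a_def by (simp add: algebra_simps)
  qed
  have "(\<Sum>k\<le>Suc N. qb q (Suc N) k * a k) = qb q (Suc N) 0 * a 0 + (\<Sum>k\<le>N. qb q (Suc N) (Suc k) * a (Suc k))"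
    by (rule sum.atMost_Suc_shift)
  also have "\<dots> = a 0 + (\<Sum>k\<le>N. qb q N (Suc k) * a (Suc k)) + (\<Sum>k\<le>N. q ^ (2 * (N - k)) * qb q N k * a (Suc k))"
    by (simp add: qb_0[OF q1 q0] qb_pascal[OF q1 q0] sum.distrib algebra_simps)
  also have "a 0 + (\<Sum>k\<le>N. qb q N (Suc k) * a (Suc k)) = (\<Sum>k\<le>Suc N. qb q N k * a k)"
    by (subst sum.atMost_Suc_shift) (simp add: qb_0[OF q1 q0])
  also have "\<dots> = qpoch z (q^2) N" using IH by (simp add: qb_gt[OF q1 q0])
  also have "(\<Sum>k\<le>N. q ^ (2 * (N - k)) * qb q N k * a (Suc k)) = - (z * q ^ (2 * N)) * qpoch z (q^2) N"
  proof -
    have "(\<Sum>k\<le>N. q ^ (2 * (N - k)) * qb q N k * a (Suc k)) = (\<Sum>k\<le>N. - (z * q ^ (2 * N)) * (qb q N k * a k))"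
    proof (rule sum.cong)
      fix k assume "k \<in> {..N}"
      hence kN: "k \<le> N" by simp
      have "q ^ (2 * (N - k)) * qb q N k * a (Suc k) = qb q N k * (q ^ (2 * (N - k)) * a (Suc k))"
        by (simp only: mult_ac)
      also have "\<dots> = - (z * q ^ (2 * N)) * (qb q N k * a k)" unfolding ak[OF kN] by (simp only: mult_ac)
      finally show "q ^ (2 * (N - k)) * qb q N k * a (Suc k) = - (z * q ^ (2 * N)) * (qb q N k * a k)" .
    qed simp
    thus ?thesis by (simp only: sum_negf sum_distrib_left[symmetric] IH)
  qed
  moreover have "q ^ (2 * N) = (q^2)^N" by (simp add: power_mult)
  ultimately show ?case unfolding a_def[symmetric] qpoch_Suc by (simp add: algebra_simps)
qed

lemma fth_shift:
  fixes m :: int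
  shows "q ^ k * fth q (m - int k) = fth q m * ((-1)^k * q^(k*(k-1)) * (q powi (2 - 2 * m))^k)"
proof -
  have s1: "(-1::complex) powi (m - int k) = (-1) powi m * (-1)^k"
    using power_int_add[of "-1::complex" m "- int k"] by (simp add: power_int_minus_one_minus)
  have ek: "int (k * (k - 1)) = int k * (int k - 1)" by (cases k) (auto simp: algebra_simps)
  have s2: "q ^ k * q powi ((m - int k)^2) = q powi (m^2) * (q^(k*(k-1)) * (q powi (2 - 2 * m))^k)"
  proof -
    have "q ^ k * q powi ((m - int k)^2) = q powi (int k + (m - int k)^2)"
      using q0 by (simp add: power_int_add)
    also have "int k + (m - int k)^2 = m^2 + (int (k * (k - 1)) + (2 - 2 * m) * int k)"
      unfolding ek by (simp add: power2_eq_square algebra_simps)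
    also have "q powi \<dots> = q powi (m^2) * (q powi (int (k * (k - 1))) * q powi ((2 - 2 * m) * int k))"
      using q0 by (simp add: power_int_add)
    also have "\<dots> = q powi (m^2) * (q^(k*(k-1)) * (q powi (2 - 2 * m))^k)"
      by (simp only: power_int_of_nat power_int_power')
    finally show ?thesis .
  qed
  show ?thesis unfolding fth_def s1 using s2 by (simp add: algebra_simps)
qed

lemma Zs_diff:
  fixes m :: int
  assumes "1 \<le> m" "m \<le> int N"
  shows "Zs q N m = Zs q N (m - 1)"
proof -
  define z where "z = q powi (2 - 2 * m)"
  have "Zs q N m - Zs q N (m - 1) = (\<Sum>k\<le>N. qb q N k * q ^ k * (St q (m - int k) - St q (m - int k - 1)))"
    unfolding Zs_def by (simp add: sum_subtractf[symmetric] algebra_simps)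
  also have "\<dots> = (\<Sum>k\<le>N. 2 * fth q m * (qb q N k * ((-1)^k * q^(k*(k-1)) * z^k)))"
  proof (rule sum.cong)
    fix k assume "k \<in> {..N}"
    have "qb q N k * q ^ k * (St q (m - int k) - St q (m - int k - 1)) = 2 * qb q N k * (q ^ k * fth q (m - int k))"
      by (simp add: St_diff)
    also have "\<dots> = 2 * fth q m * (qb q N k * ((-1)^k * q^(k*(k-1)) * z^k))"
      unfolding fth_shift z_def by simp
    finally show "qb q N k * q ^ k * (St q (m - int k) - St q (m - int k - 1)) = 2 * fth q m * (qb q N k * ((-1)^k * q^(k*(k-1)) * z^k))" .
  qed simp
  also have "\<dots> = 2 * fth q m * qpoch z (q^2) N"
    by (simp only: sum_distrib_left[symmetric] rothe)
  also have "qpoch z (q^2) N = 0"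
  proof -
    define j where "j = nat (m - 1)"
    have jN: "j < N" using assms unfolding j_def by simp
    have qj: "(q^2)^j = q powi (int (2 * j))" by (simp only: power_int_of_nat power_mult)
    have "z * (q^2)^j = q powi (2 - 2 * m) * q powi (2 * int j)"
      unfolding z_def qj by simp
    also have "\<dots> = q powi 0" unfolding j_def using assms q0 by (simp add: power_int_add[symmetric])
    finally have "1 - z * (q^2)^j = 0" by simp
    thus ?thesis unfolding qpoch_def using jN by (intro prod_zero) auto
  qed
  finally show ?thesis by simp
qed

lemma Zs_step: "Zs q (Suc N) 0 = Zs q N 0 - q ^ Suc N * Zs q N (int N)"
proof -
  define g where "g k = qb q N k * q ^ k * St q (- int k)" for k
  have "Zs q (Suc N) 0 = qb q (Suc N) 0 * q ^ 0 * St q 0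
      + (\<Sum>k\<le>N. qb q (Suc N) (Suc k) * q ^ Suc k * St q (- int (Suc k)))"
    unfolding Zs_def by (subst sum.atMost_Suc_shift) simp
  also have "\<dots> = (St q 0 + (\<Sum>k\<le>N. qb q N (Suc k) * q ^ Suc k * St q (- int (Suc k))))
      + (\<Sum>k\<le>N. q ^ (2 * (N - k)) * qb q N k * q ^ Suc k * St q (-1 - int k))"
    by (simp add: qb_0[OF q1 q0] qb_pascal[OF q1 q0] sum.distrib algebra_simps)
  also have "St q 0 + (\<Sum>k\<le>N. qb q N (Suc k) * q ^ Suc k * St q (- int (Suc k))) = Zs q N 0"
  proof -
    have "Zs q N 0 = (\<Sum>k\<le>Suc N. g k)" unfolding Zs_def g_def by (simp add: qb_gt[OF q1 q0])
    also have "\<dots> = St q 0 + (\<Sum>k\<le>N. qb q N (Suc k) * q ^ Suc k * St q (- int (Suc k)))"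
      unfolding g_def by (subst sum.atMost_Suc_shift) (simp add: qb_0[OF q1 q0])
    finally show ?thesis by simp
  qed
  also have "(\<Sum>k\<le>N. q ^ (2 * (N - k)) * qb q N k * q ^ Suc k * St q (-1 - int k))
       = - (\<Sum>k\<le>N. q ^ Suc N * (qb q N k * q ^ (N - k) * St q (int k)))"
  proof -
    have "(\<Sum>k\<le>N. q ^ (2 * (N - k)) * qb q N k * q ^ Suc k * St q (-1 - int k))
       = (\<Sum>k\<le>N. - (q ^ Suc N * (qb q N k * q ^ (N - k) * St q (int k))))"
    proof (rule sum.cong)
      fix k assume "k \<in> {..N}"
      hence ee: "2 * (N - k) + Suc k = Suc N + (N - k)" by auto
      have pe: "q ^ (2 * (N - k)) * q ^ Suc k = q ^ Suc N * q ^ (N - k)" by (simp only: power_add[symmetric] ee)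
      have "q ^ (2 * (N - k)) * qb q N k * q ^ Suc k * St q (-1 - int k)
          = - ((q ^ (2 * (N - k)) * q ^ Suc k) * (qb q N k * St q (int k)))"
        unfolding St_neg by (simp add: mult_ac)
      also have "\<dots> = - ((q ^ Suc N * q ^ (N - k)) * (qb q N k * St q (int k)))" by (simp only: pe)
      finally show "q ^ (2 * (N - k)) * qb q N k * q ^ Suc k * St q (-1 - int k) = - (q ^ Suc N * (qb q N k * q ^ (N - k) * St q (int k)))"
        by (simp only: mult_ac)
    qed simp
    thus ?thesis by (simp add: sum_negf)
  qed
  also have "(\<Sum>k\<le>N. q ^ Suc N * (qb q N k * q ^ (N - k) * St q (int k))) = q ^ Suc N * Zs q N (int N)"
  proof -
    have "Zs q N (int N) = (\<Sum>k\<le>N. qb q N (N - k) * q ^ (N - k) * St q (int N - int (N - k)))"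
      unfolding Zs_def by (rule sum_atMost_flip)
    also have "\<dots> = (\<Sum>k\<le>N. qb q N k * q ^ (N - k) * St q (int k))"
      by (rule sum.cong) (auto simp: qb_sym[OF q1 q0] of_nat_diff)
    finally show ?thesis by (simp add: sum_distrib_left)
  qed
  finally show ?thesis by simp
qed

lemma Zs_const: "0 \<le> m \<Longrightarrow> m \<le> int N \<Longrightarrow> Zs q N m = qpoch q q N"
proof (induction N arbitrary: m)
  case 0
  hence "m = 0" by simp
  thus ?case by (simp add: Zs_def qb_0[OF q1 q0] St_0)
next
  case (Suc N)
  have base: "Zs q (Suc N) 0 = qpoch q q (Suc N)"
    unfolding Zs_step using Suc.IH[of 0] Suc.IH[of "int N"] by (simp add: qpoch_Suc algebra_simps)
  have "\<forall>j::nat. j \<le> Suc N \<longrightarrow> Zs q (Suc N) (int j) = qpoch q q (Suc N)"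
  proof (intro allI)
    fix j :: nat show "j \<le> Suc N \<longrightarrow> Zs q (Suc N) (int j) = qpoch q q (Suc N)"
    proof (induction j)
      case 0 thus ?case using base by simp
    next
      case (Suc j)
      show ?case
      proof
        assume "Suc j \<le> Suc N"
        hence "Zs q (Suc N) (int (Suc j)) = Zs q (Suc N) (int (Suc j) - 1)"
          by (intro Zs_diff) auto
        thus "Zs q (Suc N) (int (Suc j)) = qpoch q q (Suc N)" using Suc \<open>Suc j \<le> Suc N\<close> by simp
      qed
    qed
  qed
  thus ?case using Suc.prems by (metis nonneg_int_cases of_nat_le_iff)
qed

end

context
  fixes q :: complex
  assumes q1: "norm q < 1" and q0: "q \<noteq> 0"
begin

lemma bailey_pair:
  "(\<Sum>r\<le>n. (1 - q^(2*r+1)) * inverse q ^ r * St q (int r)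
      / (qpoch (q^2) (q^2) (n - r) * qpoch (q^2) (q^2) (n + r + 1)))
   = inverse q ^ n / qpoch (-q) q (2*n+1)"
proof -
  define N where "N = 2 * n + 1"
  define P where "P = qpoch (q^2) (q^2)"
  have Pnz: "P j \<noteq> 0" for j unfolding P_def by (rule P_nz[OF q1 q0])
  define T where "T r = (1 - q^(2*r+1)) * inverse q ^ r * St q (int r) / (P (n - r) * P (n + r + 1))" for r
  define g where "g k = qb q N k * q ^ k * St q (int n - int k)" for k
  have "Zs q N (int n) = qpoch q q N" by (rule Zs_const[OF q1 q0]) (auto simp: N_def)
  have e: "Suc N = Suc n + Suc n" by (simp add: N_def)
  have Zs: "Zs q N (int n) = (\<Sum>k<Suc n + Suc n. g k)"
    unfolding Zs_def g_def e[symmetric] by (simp only: lessThan_Suc_atMost)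
  also have "\<dots> = (\<Sum>k\<le>n. g k) + (\<Sum>r\<le>n. g (Suc n + r))"
    by (simp only: sum_split_add lessThan_Suc_atMost)
  also have "(\<Sum>k\<le>n. g k) = (\<Sum>r\<le>n. g (n - r))" by (rule sum_atMost_flip)
  also have "(\<Sum>r\<le>n. g (n - r)) + (\<Sum>r\<le>n. g (Suc n + r)) = (\<Sum>r\<le>n. P N * q ^ n * T r)"
    unfolding sum.distrib[symmetric]
  proof (rule sum.cong)
    fix r assume "r \<in> {..n}"
    hence rn: "r \<le> n" by simp
    have A: "qb q N (n - r) = P N / (P (n - r) * P (n + r + 1))"
      unfolding qb_def P_def N_def using rn by (simp add: algebra_simps)
    have B: "qb q N (Suc n + r) = P N / (P (n - r) * P (n + r + 1))"
      unfolding qb_def P_def N_def using rn by (simp add: algebra_simps)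
    have C1: "St q (int n - int (n - r)) = St q (int r)" using rn by (simp add: of_nat_diff)
    have C2: "St q (int n - int (Suc n + r)) = - St q (int r)"
      using St_neg[of q "int r"] by (simp add: algebra_simps)
    have D0: "q ^ n = q ^ (n - r) * q ^ r" using rn by (simp add: power_add[symmetric])
    have D1: "q ^ (n - r) = q ^ n * inverse q ^ r" unfolding D0 using q0 by (simp add: power_inverse)
    have D2: "q ^ (Suc n + r) = q ^ n * q ^ (2 * r + 1) * inverse q ^ r"
    proof -
      have "Suc n + r = (n - r) + (2 * r + 1)" using rn by simp
      hence "q ^ (Suc n + r) = q ^ (n - r) * q ^ (2 * r + 1)"
        by (simp only: power_add[symmetric])
      thus ?thesis unfolding D1 by (simp add: mult_ac)
    qed
    show "g (n - r) + g (Suc n + r) = P N * q ^ n * T r"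
      unfolding g_def A B C1 C2 D1 D2 T_def using Pnz q0
      by (simp add: field_simps)
  qed simp
  also have "\<dots> = P N * q ^ n * (\<Sum>r\<le>n. T r)" by (simp add: sum_distrib_left)
  finally have main: "P N * q ^ n * (\<Sum>r\<le>n. T r) = qpoch q q N"
    using \<open>Zs q N (int n) = qpoch q q N\<close> by simp
  have qqnz: "qpoch q q N \<noteq> 0" using pow_ne1[OF q1 q0] by (intro qpoch_nonzero) auto
  have PN: "P N = qpoch q q N * qpoch (-q) q N" unfolding P_def by (simp add: qq2)
  have "(\<Sum>r\<le>n. T r) = inverse q ^ n / qpoch (-q) q N"
  proof -
    have mq: "qpoch (-q) q N \<noteq> 0" using Pnz[of N] PN by auto
    show ?thesis using main qqnz q0 mq unfolding PN by (simp add: field_simps power_inverse)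
  qed
  thus ?thesis unfolding T_def P_def N_def by simp
qed

end

lemma geom2_summable:
  fixes x y K :: real
  assumes "0 \<le> x" "x < 1" "0 \<le> y" "y < 1" "0 \<le> K"
  shows "(\<lambda>(r, n). K * x ^ r * y ^ n) summable_on (UNIV \<times> UNIV)"
proof (rule summable_on_SigmaI[where g = "\<lambda>r. K * x ^ r * (1 / (1 - y))"])
  fix r :: nat
  have "(\<lambda>n. K * x ^ r * y ^ n) sums (K * x ^ r * (1 / (1 - y)))"
    using assms by (intro sums_mult geometric_sums) auto
  hence "((\<lambda>n. K * x ^ r * y ^ n) has_sum (K * x ^ r * (1 / (1 - y)))) UNIV"
    using assms by (intro sums_nonneg_imp_has_sum) auto
  thus "((\<lambda>n. case (r, n) of (r, n) \<Rightarrow> K * x ^ r * y ^ n) has_sum (K * x ^ r * (1 / (1 - y)))) UNIV"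
    by simp
next
  have "(\<lambda>r. K * (1 / (1 - y)) * x ^ r) sums (K * (1 / (1 - y)) * (1 / (1 - x)))"
    using assms by (intro sums_mult geometric_sums) auto
  hence "((\<lambda>r. K * (1 / (1 - y)) * x ^ r) has_sum (K * (1 / (1 - y)) * (1 / (1 - x)))) UNIV"
    using assms by (intro sums_nonneg_imp_has_sum) auto
  hence "(\<lambda>r. K * (1 / (1 - y)) * x ^ r) summable_on UNIV" by (rule has_sum_imp_summable)
  thus "(\<lambda>r. K * x ^ r * (1 / (1 - y))) summable_on UNIV" by (simp add: mult_ac)
next
  fix r n :: nat
  show "0 \<le> (case (r, n) of (r, n) \<Rightarrow> K * x ^ r * y ^ n)" using assms by simp
qed

definition bcn :: "complex \<Rightarrow> complex \<Rightarrow> complex \<Rightarrow> nat \<Rightarrow> complex" where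
  "bcn p a c n = qpoch (p / a) p n * qpoch (p / c) p n * (a * c) ^ n"

definition bM :: "complex \<Rightarrow> nat \<Rightarrow> nat \<Rightarrow> complex" where
  "bM p n r = 1 / (qpoch p p (n - r) * qpoch (p * p) p (n + r))"

definition bConst :: "complex \<Rightarrow> complex \<Rightarrow> complex \<Rightarrow> complex" where
  "bConst p a c = qpoch_inf (a * p) p * qpoch_inf (c * p) p / (qpoch_inf (p * p) p * qpoch_inf (a * c) p)"

definition bailey_ok :: "complex \<Rightarrow> complex \<Rightarrow> complex \<Rightarrow> bool" where
  "bailey_ok p a c \<longleftrightarrow> norm p < 1 \<and> p \<noteq> 0 \<and> a \<noteq> 0 \<and> c \<noteq> 0 \<and> (\<forall>k. a * p ^ Suc k \<noteq> 1)
      \<and> (\<forall>k. c * p ^ Suc k \<noteq> 1) \<and> norm (a * c) < 1"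

lemma pow_ne1': "norm p < 1 \<Longrightarrow> p \<noteq> 0 \<Longrightarrow> 0 < j \<Longrightarrow> (p::complex) ^ j \<noteq> 1"
  using pow_ne1[of p "j - 1"] by (cases j) auto

lemma bailey_inner:
  assumes ok: "bailey_ok p a c"
  shows "(\<lambda>m. bcn p a c (m + r) * bM p (m + r) r) sums
           (bcn p a c r / (qpoch (a * p) p r * qpoch (c * p) p r) * bConst p a c)"
proof -
  have p1: "norm p < 1" "p \<noteq> 0" and ac: "a \<noteq> 0" "c \<noteq> 0" and an: "\<And>k. a * p ^ Suc k \<noteq> 1"
    and cn: "\<And>k. c * p ^ Suc k \<noteq> 1" and acn: "norm (a * c) < 1"
    using ok unfolding bailey_ok_def by auto
  define A where "A = p / a * p ^ r"
  define B where "B = p / c * p ^ r"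
  define C where "C = p * p * p ^ (2 * r)"
  have pr: "p ^ (2 * r) = p ^ r * p ^ r" by (simp add: mult_2 power_add)
  have z: "C / (A * B) = a * c" unfolding A_def B_def C_def pr using p1 ac
    by (simp add: field_simps)
  have Ck: "C * p ^ k \<noteq> 1" for k
  proof -
    have "C * p ^ k = p ^ (Suc (Suc (2 * r + k)))" unfolding C_def by (simp add: power_add mult_ac)
    moreover have "p ^ (Suc (Suc (2 * r + k))) \<noteq> 1" by (rule pow_ne1'[OF p1]) simp
    ultimately show ?thesis by simp
  qed
  have okg: "qg_ok A B C p"
    unfolding qg_ok_def z using p1 ac acn Ck by (auto simp: A_def B_def)
  define W where "W = qpoch (p / a) p r * qpoch (p / c) p r * (a * c) ^ r / qpoch (p * p) p (2 * r)"
  have ppnz: "\<And>k. p * p * p ^ k \<noteq> 1" using pow_ne1'[OF p1] by (metis mult.assoc power_Suc zero_less_Suc)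
  have nz1: "qpoch (p * p) p j \<noteq> 0" for j using ppnz by (intro qpoch_nonzero) auto
  have nz2: "qpoch C p m \<noteq> 0" for m using okg unfolding qg_ok_def by (intro qpoch_nonzero) auto
  have nz3: "qpoch p p m \<noteq> 0" for m using p1 by (rule qpoch_pp_nonzero)
  have tm: "bcn p a c (m + r) * bM p (m + r) r = W * gt A B C p m" for m
  proof -
    have s1: "qpoch (p / a) p (m + r) = qpoch (p / a) p r * qpoch A p m"
      unfolding A_def using qpoch_add[of "p / a" p r m] by (simp add: add.commute)
    have s2: "qpoch (p / c) p (m + r) = qpoch (p / c) p r * qpoch B p m"
      unfolding B_def using qpoch_add[of "p / c" p r m] by (simp add: add.commute)
    have s3: "qpoch (p * p) p (m + r + r) = qpoch (p * p) p (2 * r) * qpoch C p m"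
    proof -
      have e: "m + r + r = 2 * r + m" by simp
      show ?thesis unfolding C_def e by (rule qpoch_add)
    qed
    have s4: "m + r - r = m" by simp
    show ?thesis unfolding bcn_def bM_def gt_def W_def z s1 s2 s3 s4 using nz1 nz2 nz3
      by (simp add: field_simps power_add)
  qed
  have "(\<lambda>m. W * gt A B C p m) sums (W * qgs A B C p)"
    unfolding qgs_def by (intro sums_mult summable_sums gt_summable okg)
  also have "qgs A B C p = qpoch_inf (a * p * p ^ r) p * qpoch_inf (c * p * p ^ r) p
      / (qpoch_inf (p * p * p ^ (2 * r)) p * qpoch_inf (a * c) p)"
  proof -
    have CA: "C / A = a * p * p ^ r" "C / B = c * p * p ^ r" unfolding A_def C_def B_def pr using p1 ac
      by (simp_all add: field_simps)
    show ?thesis unfolding qgauss[OF okg] z CA by (simp add: C_def)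
  qed
  also have "W * (qpoch_inf (a * p * p ^ r) p * qpoch_inf (c * p * p ^ r) p
      / (qpoch_inf (p * p * p ^ (2 * r)) p * qpoch_inf (a * c) p))
    = bcn p a c r / (qpoch (a * p) p r * qpoch (c * p) p r) * bConst p a c"
  proof -
    have anz: "a * p * p ^ k \<noteq> 1" for k using an[of k] by (simp add: mult.assoc)
    have cnz: "c * p * p ^ k \<noteq> 1" for k using cn[of k] by (simp add: mult.assoc)
    have acnz: "a * c * p ^ k \<noteq> 1" for k
    proof -
      have "norm (a * c * p ^ k) = norm (a * c) * norm p ^ k" by (simp add: norm_mult norm_power)
      also have "\<dots> \<le> norm (a * c)" using p1 by (simp add: mult_left_le power_le_one)
      finally show ?thesis using acn by auto
    qed
    have e1: "qpoch_inf (a * p) p = qpoch (a * p) p r * qpoch_inf (a * p * p ^ r) p"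
      by (rule qpoch_inf_split[OF p1(1)])
    have e2: "qpoch_inf (c * p) p = qpoch (c * p) p r * qpoch_inf (c * p * p ^ r) p"
      by (rule qpoch_inf_split[OF p1(1)])
    have e3: "qpoch_inf (p * p) p = qpoch (p * p) p (2 * r) * qpoch_inf (p * p * p ^ (2 * r)) p"
      by (rule qpoch_inf_split[OF p1(1)])
    have n1: "qpoch (a * p) p r \<noteq> 0" using anz by (intro qpoch_nonzero) auto
    have n2: "qpoch (c * p) p r \<noteq> 0" using cnz by (intro qpoch_nonzero) auto
    have n3: "qpoch_inf (p * p * p ^ (2 * r)) p \<noteq> 0"
      using ppnz by (intro qpoch_inf_nonzero[OF p1(1)]) (metis mult.assoc power_add)
    have n4: "qpoch_inf (a * c) p \<noteq> 0" by (intro qpoch_inf_nonzero[OF p1(1)] acnz)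
    show ?thesis unfolding bConst_def e1 e2 e3 W_def bcn_def using n1 n2 n3 n4 nz1
      by (simp add: field_simps)
  qed
  finally show ?thesis unfolding tm .
qed

lemma bConst_nz:
  assumes ok: "bailey_ok p a c"
  shows "bConst p a c \<noteq> 0"
proof -
  have p1: "norm p < 1" "p \<noteq> 0" and an: "\<And>k. a * p ^ Suc k \<noteq> 1"
    and cn: "\<And>k. c * p ^ Suc k \<noteq> 1" and acn: "norm (a * c) < 1"
    using ok unfolding bailey_ok_def by auto
  have anz: "a * p * p ^ k \<noteq> 1" for k using an[of k] by (simp add: mult.assoc)
  have cnz: "c * p * p ^ k \<noteq> 1" for k using cn[of k] by (simp add: mult.assoc)
  have ppnz: "\<And>k. p * p * p ^ k \<noteq> 1" using pow_ne1'[OF p1] by (metis mult.assoc power_Suc zero_less_Suc)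
  have acnz: "a * c * p ^ k \<noteq> 1" for k
  proof -
    have "norm (a * c * p ^ k) = norm (a * c) * norm p ^ k" by (simp add: norm_mult norm_power)
    also have "\<dots> \<le> norm (a * c)" using p1 by (simp add: mult_left_le power_le_one)
    finally show ?thesis using acn by auto
  qed
  show ?thesis unfolding bConst_def using qpoch_inf_nonzero[OF p1(1)] anz cnz ppnz acnz by simp
qed

lemma bailey:
  fixes \<alpha> \<beta> :: "nat \<Rightarrow> complex"
  assumes ok: "bailey_ok p a c"
    and R0: "0 \<le> R" and Rt: "R * norm (a * c) < 1"
    and Kb: "\<And>r. norm (\<alpha> r) \<le> K * R ^ r"
    and beta: "\<And>n. \<beta> n = (\<Sum>r\<le>n. \<alpha> r / (qpoch p p (n - r) * qpoch (p * p) p (n + r)))"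
  shows "(\<lambda>r. bConst p a c * (bcn p a c r * \<alpha> r / (qpoch (a * p) p r * qpoch (c * p) p r)))
           sums (\<Sum>n. bcn p a c n * \<beta> n)"
proof -
  have p1: "norm p < 1" "p \<noteq> 0" and acn: "norm (a * c) < 1"
    using ok unfolding bailey_ok_def by auto
  have ppnz: "\<And>k. p * p * p ^ k \<noteq> 1" using pow_ne1'[OF p1] by (metis mult.assoc power_Suc zero_less_Suc)
  obtain M1 where M1: "\<And>n. norm (qpoch (p / a) p n) \<le> M1" using qpoch_upper_bound[OF p1(1)] by blast
  obtain M2 where M2: "\<And>n. norm (qpoch (p / c) p n) \<le> M2" using qpoch_upper_bound[OF p1(1)] by blast
  obtain dp where dp: "dp > 0" "\<And>n. dp \<le> norm (qpoch p p n)"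
    using qpoch_lower_bound[OF p1(1), of p] pow_ne1[OF p1] by blast
  obtain dq where dq: "dq > 0" "\<And>n. dq \<le> norm (qpoch (p * p) p n)"
    using qpoch_lower_bound[OF p1(1), of "p * p"] ppnz by blast
  have M10: "0 \<le> M1" using M1[of 0] by simp
  have M20: "0 \<le> M2" using M2[of 0] by simp
  have K0: "0 \<le> K" using Kb[of 0] by (simp add: order_trans[OF norm_ge_zero])
  define t where "t = norm (a * c)"
  have t: "0 \<le> t" "t < 1" "R * t < 1" using acn Rt unfolding t_def by auto
  define y where "y = (max t (R * t) + 1) / 2"
  have y: "t < y" "R * t < y" "y < 1" "0 < y" using t unfolding y_def by (auto simp: max_def)
  define x where "x = R * t / y"
  have x: "0 \<le> x" "x < 1" using y t R0 unfolding x_def by (auto simp: divide_simps)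
  have key: "R ^ r * t ^ n \<le> x ^ r * y ^ n" if "r \<le> n" for r n
  proof -
    have "t ^ n = t ^ r * t ^ (n - r)" using that by (simp add: power_add[symmetric])
    also have "\<dots> \<le> t ^ r * y ^ (n - r)"
      using t y by (intro mult_left_mono power_mono) auto
    finally have "R ^ r * t ^ n \<le> R ^ r * (t ^ r * y ^ (n - r))"
      using R0 by (intro mult_left_mono) auto
    also have "\<dots> = (R * t / y) ^ r * (y ^ r * y ^ (n - r))"
      using y by (simp add: power_mult_distrib power_divide field_simps)
    also have "y ^ r * y ^ (n - r) = y ^ n" using that by (simp add: power_add[symmetric])
    finally show ?thesis unfolding x_def .
  qed
  define Kc where "Kc = M1 * M2 * K / (dp * dq)"
  have Kc0: "0 \<le> Kc" unfolding Kc_def using M10 M20 K0 dp dq by simp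
  define f where "f = (\<lambda>(r, n). if r \<le> n then bcn p a c n * \<alpha> r * bM p n r else 0)"
  have fb: "norm (f (r, n)) \<le> Kc * x ^ r * y ^ n" for r n
  proof (cases "r \<le> n")
    case True
    have nb: "norm (bcn p a c n) \<le> M1 * M2 * t ^ n"
      unfolding bcn_def t_def norm_mult norm_power
      using M1 M2 M10 M20 by (intro mult_mono mult_right_mono) auto
    have mb: "norm (bM p n r) \<le> 1 / (dp * dq)"
      unfolding bM_def norm_divide norm_mult using dp dq
      by (intro frac_le mult_mono) auto
    have "norm (f (r, n)) = norm (bcn p a c n) * norm (\<alpha> r) * norm (bM p n r)"
      unfolding f_def using True by (simp add: norm_mult)
    also have "\<dots> \<le> (M1 * M2 * t ^ n) * (K * R ^ r) * (1 / (dp * dq))"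
      using nb mb Kb M10 M20 K0 t R0 by (intro mult_mono) auto
    also have "\<dots> = Kc * (R ^ r * t ^ n)" unfolding Kc_def by simp
    also have "\<dots> \<le> Kc * (x ^ r * y ^ n)" using key[OF True] Kc0 by (intro mult_left_mono) auto
    finally show ?thesis by (simp add: mult.assoc)
  next
    case False
    thus ?thesis unfolding f_def using Kc0 x y by simp
  qed
  have hs: "(\<lambda>(r, n). Kc * x ^ r * y ^ n) summable_on (UNIV \<times> UNIV)"
    using x y Kc0 by (intro geom2_summable) auto
  have "(\<lambda>z. norm (f z)) summable_on (UNIV \<times> UNIV)"
  proof (rule summable_on_comparison_test[OF hs])
    fix z :: "nat \<times> nat" show "norm (f z) \<le> (case z of (r, n) \<Rightarrow> Kc * x ^ r * y ^ n)"
      using fb by (cases z) auto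
  qed simp
  hence fs: "f summable_on (UNIV \<times> UNIV)" by (simp add: summable_on_iff_abs_summable_on_complex)
  define S where "S = infsum f (UNIV \<times> UNIV)"
  have hasS: "(f has_sum S) (UNIV \<times> UNIV)" unfolding S_def using fs by (rule has_sum_infsum)
  define I where "I r = bcn p a c r / (qpoch (a * p) p r * qpoch (c * p) p r) * bConst p a c" for r
  have inner1: "((\<lambda>n. f (r, n)) has_sum (\<alpha> r * I r)) UNIV" for r
  proof (rule norm_summable_imp_has_sum)
    have "summable (\<lambda>n. Kc * x ^ r * y ^ n)" using y by (intro summable_mult summable_geometric) auto
    thus "summable (\<lambda>n. norm (f (r, n)))"
      by (rule summable_comparison_test'[where N=0]) (use fb in simp)
    have "(\<lambda>m. \<alpha> r * (bcn p a c (m + r) * bM p (m + r) r)) sums (\<alpha> r * I r)"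
      unfolding I_def by (intro sums_mult bailey_inner ok)
    hence "(\<lambda>m. f (r, m + r)) sums (\<alpha> r * I r)" unfolding f_def by (simp add: mult_ac)
    hence H': "(\<lambda>i. (\<lambda>n. f (r, n)) (i + r)) sums (\<alpha> r * I r)" by simp
    have "(\<lambda>n. f (r, n)) sums (\<alpha> r * I r + (\<Sum>i<r. (\<lambda>n. f (r, n)) i))"
      by (rule sums_iff_shift[THEN iffD1, OF H'])
    moreover have "(\<Sum>i<r. f (r, i)) = 0" unfolding f_def by simp
    ultimately show "(\<lambda>n. f (r, n)) sums (\<alpha> r * I r)" by simp
  qed
  have "((\<lambda>r. \<alpha> r * I r) has_sum S) UNIV"
    by (rule has_sum_SigmaD[OF hasS]) (use inner1 in simp)
  hence s1: "(\<lambda>r. \<alpha> r * I r) sums S" by (rule has_sum_imp_sums)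
  have hasS2: "((\<lambda>(n, r). f (r, n)) has_sum S) (UNIV \<times> UNIV)"
    using hasS by (subst (asm) has_sum_swap) simp
  have inner2: "((\<lambda>r. f (r, n)) has_sum (bcn p a c n * \<beta> n)) UNIV" for n
  proof (rule has_sum_finite_neutralI[where B = "{..n}"])
    show "bcn p a c n * \<beta> n = (\<Sum>r\<in>{..n}. f (r, n))"
      unfolding beta f_def bM_def by (simp add: sum_distrib_left)
  qed (auto simp: f_def)
  have "((\<lambda>n. bcn p a c n * \<beta> n) has_sum S) UNIV"
    by (rule has_sum_SigmaD[OF hasS2]) (use inner2 in simp)
  hence s2: "(\<lambda>n. bcn p a c n * \<beta> n) sums S" by (rule has_sum_imp_sums)
  have "(\<lambda>r. \<alpha> r * I r) = (\<lambda>r. bConst p a c * (bcn p a c r * \<alpha> r / (qpoch (a * p) p r * qpoch (c * p) p r)))"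
    unfolding I_def by (auto simp: field_simps)
  thus ?thesis using s1 sums_unique[OF s2] by simp
qed

lemma fth_nat: "fth q (int k) = (-1) ^ k * q ^ (k^2)"
  unfolding fth_def by (simp flip: of_nat_power)

lemma St_bound:
  fixes q :: complex
  assumes q1: "norm q < 1"
  shows "norm (St q (int r)) \<le> 1 + 2 / (1 - norm q)"
proof -
  have "norm (St q (int r)) \<le> 1 + 2 * (\<Sum>i<r. norm q ^ i)"
  proof (induction r)
    case 0 thus ?case by (simp add: St_0)
  next
    case (Suc r)
    have d0: "St q (int (Suc r)) - St q (int r) = 2 * fth q (int (Suc r))"
      using St_diff_pos[of "int (Suc r)" q] by simp
    have d: "St q (int (Suc r)) = St q (int r) + 2 * fth q (int (Suc r))"
      using d0 by (metis add.commute diff_eq_eq)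
    have "norm (fth q (int (Suc r))) = norm q ^ ((Suc r)^2)" unfolding fth_nat by (simp add: norm_mult norm_power)
    also have "\<dots> \<le> norm q ^ r" using q1 by (intro power_decreasing) (auto simp: power2_eq_square)
    finally have fb: "norm (fth q (int (Suc r))) \<le> norm q ^ r" .
    have "norm (St q (int (Suc r))) \<le> norm (St q (int r)) + 2 * norm (fth q (int (Suc r)))"
      unfolding d by (rule order_trans[OF norm_triangle_ineq]) (simp add: norm_mult)
    also have "\<dots> \<le> 1 + 2 * (\<Sum>i<r. norm q ^ i) + 2 * norm q ^ r" using Suc.IH fb by linarith
    finally show ?case by simp
  qed
  also have "(\<Sum>i<r. norm q ^ i) \<le> 1 / (1 - norm q)"
  proof -
    have "(\<Sum>i<r. norm q ^ i) = (1 - norm q ^ r) / (1 - norm q)"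
      using q1 by (simp add: sum_gp_strict)
    also have "\<dots> \<le> 1 / (1 - norm q)" using q1 by (intro divide_right_mono) auto
    finally show ?thesis .
  qed
  hence "1 + 2 * (\<Sum>i<r. norm q ^ i) \<le> 1 + 2 / (1 - norm q)" by simp
  finally show ?thesis .
qed

theorem theorem5p3:
  fixes q a c :: complex
  assumes "0 < norm q" and "norm q < 1"
    and "a \<noteq> 0" and "c \<noteq> 0"
    and "\<And>k::nat. q ^ (2 * k + 2) * a \<noteq> 1"
    and "\<And>k::nat. q ^ (2 * k + 2) * c \<noteq> 1"
    and "norm (a * c) < norm q"
  shows "(\<Sum>n. (\<Sum>j\<in>{-int n..int n}. (-1) powi j * (1 - q ^ (2 * n + 1)) * q powi (j\<^sup>2 - int n))
             * (qpoch (q\<^sup>2 / a) (q\<^sup>2) n * qpoch (q\<^sup>2 / c) (q\<^sup>2) n * (a * c) ^ n)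
             / (qpoch (q\<^sup>2 * a) (q\<^sup>2) n * qpoch (q\<^sup>2 * c) (q\<^sup>2) n))
       = (qpoch_inf (q\<^sup>2) (q\<^sup>2) * qpoch_inf (c * a) (q\<^sup>2))
           / (qpoch_inf (q\<^sup>2 * a) (q\<^sup>2) * qpoch_inf (q\<^sup>2 * c) (q\<^sup>2))
         * (\<Sum>n. (qpoch (q\<^sup>2 / a) (q\<^sup>2) n * qpoch (q\<^sup>2 / c) (q\<^sup>2) n * (a * c / q) ^ n)
                 / (qpoch (- q) q (2 * n) * (1 + q ^ (2 * n + 1))))"
proof -
  note q0' = assms(1) and q1 = assms(2) and a0 = assms(3) and c0 = assms(4)
    and an = assms(5) and cn = assms(6) and acq = assms(7)
  have q0: "q \<noteq> 0" using q0' by auto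
  define p where "p = q^2"
  have p1: "norm p < 1" unfolding p_def using q1 by (simp add: norm_power power_less_one_iff)
  have p0: "p \<noteq> 0" unfolding p_def using q0 by simp
  have p1ne: "1 - p \<noteq> 0" using p1 by auto
  have ok: "bailey_ok p a c"
  proof -
    have "a * p ^ Suc k \<noteq> 1" "c * p ^ Suc k \<noteq> 1" for k
    proof -
      have "p ^ Suc k = q ^ (2 * k + 2)" unfolding p_def power_mult[symmetric] by simp
      thus "a * p ^ Suc k \<noteq> 1" "c * p ^ Suc k \<noteq> 1" using an[of k] cn[of k] by (simp_all add: mult.commute)
    qed
    moreover have "norm (a * c) < 1" using acq q1 by simp
    ultimately show ?thesis unfolding bailey_ok_def using p1 p0 a0 c0 by auto
  qed
  define \<alpha> where "\<alpha> r = (1 - q^(2*r+1)) * inverse q ^ r * St q (int r) / (1 - p)" for r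
  define \<beta> where "\<beta> n = inverse q ^ n / qpoch (-q) q (2*n+1)" for n
  define BS where "BS = 1 + 2 / (1 - norm q)"
  define K where "K = 2 * BS / norm (1 - p)"
  define R where "R = 1 / norm q"
  have R0: "0 \<le> R" unfolding R_def by simp
  have Rt: "R * norm (a * c) < 1" unfolding R_def using acq q0' by (simp add: field_simps)
  have Kb: "norm (\<alpha> r) \<le> K * R ^ r" for r
  proof -
    have n1: "norm (1 - q^(2*r+1)) \<le> 2"
    proof -
      have "norm (1 - q^(2*r+1)) \<le> norm (1::complex) + norm (q^(2*r+1))" by (rule norm_triangle_ineq4)
      also have "\<dots> = 1 + norm q ^ (2*r+1)" by (simp only: norm_power norm_one)
      also have "\<dots> \<le> 2"
      proof -
        have "norm q ^ (2*r+1) \<le> 1" by (rule power_le_one) (use q1 in auto)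
        thus ?thesis by linarith
      qed
      finally show ?thesis .
    qed
    have n2: "norm (St q (int r)) \<le> BS" unfolding BS_def by (rule St_bound[OF q1])
    have "norm (\<alpha> r) = norm (1 - q^(2*r+1)) * R ^ r * norm (St q (int r)) / norm (1 - p)"
      unfolding \<alpha>_def R_def by (simp only: norm_mult norm_divide norm_power norm_inverse inverse_eq_divide norm_one)
    also have "\<dots> \<le> 2 * R ^ r * BS / norm (1 - p)"
      using n1 n2 R0 by (intro divide_right_mono mult_mono) auto
    also have "\<dots> = K * R ^ r" unfolding K_def by simp
    finally show ?thesis .
  qed
  have beta: "\<beta> n = (\<Sum>r\<le>n. \<alpha> r / (qpoch p p (n - r) * qpoch (p * p) p (n + r)))" for n
  proof -
    have "\<beta> n = (\<Sum>r\<le>n. (1 - q^(2*r+1)) * inverse q ^ r * St q (int r)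
      / (qpoch (q^2) (q^2) (n - r) * qpoch (q^2) (q^2) (n + r + 1)))"
      unfolding \<beta>_def by (rule bailey_pair[OF q1 q0, symmetric])
    also have "\<dots> = (\<Sum>r\<le>n. \<alpha> r / (qpoch p p (n - r) * qpoch (p * p) p (n + r)))"
    proof (rule sum.cong)
      fix r
      have e: "qpoch p p (n + r + 1) = (1 - p) * qpoch (p * p) p (n + r)"
        using qpoch_add[of p p 1 "n + r"] by (simp add: qpoch_def)
      show "(1 - q^(2*r+1)) * inverse q ^ r * St q (int r)
        / (qpoch (q^2) (q^2) (n - r) * qpoch (q^2) (q^2) (n + r + 1)) = \<alpha> r / (qpoch p p (n - r) * qpoch (p * p) p (n + r))"
        unfolding p_def[symmetric] e \<alpha>_def by (simp add: field_simps)
    qed simp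
    finally show ?thesis .
  qed
  have B: "(\<lambda>r. bConst p a c * (bcn p a c r * \<alpha> r / (qpoch (a * p) p r * qpoch (c * p) p r)))
           sums (\<Sum>n. bcn p a c n * \<beta> n)"
    by (rule bailey[OF ok R0 Rt Kb beta])
  define T where "T = (qpoch_inf (q\<^sup>2) (q\<^sup>2) * qpoch_inf (c * a) (q\<^sup>2))
           / (qpoch_inf (q\<^sup>2 * a) (q\<^sup>2) * qpoch_inf (q\<^sup>2 * c) (q\<^sup>2))"
  have TC: "T * bConst p a c = 1 - p"
  proof -
    have Cnz: "bConst p a c \<noteq> 0" by (rule bConst_nz[OF ok])
    hence nz: "qpoch_inf (a * p) p \<noteq> 0" "qpoch_inf (c * p) p \<noteq> 0" "qpoch_inf (p * p) p \<noteq> 0"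
      "qpoch_inf (a * c) p \<noteq> 0" unfolding bConst_def by auto
    have sp: "qpoch_inf p p = (1 - p) * qpoch_inf (p * p) p"
      using qpoch_inf_split[OF p1, of p 1] by (simp add: qpoch_def)
    show ?thesis unfolding T_def bConst_def p_def[symmetric] sp using nz
      by (simp add: field_simps mult.commute[of c a] mult.commute[of p a] mult.commute[of p c])
  qed
  have sB: "(\<lambda>r. T * (bConst p a c * (bcn p a c r * \<alpha> r / (qpoch (a * p) p r * qpoch (c * p) p r))))
           sums (T * (\<Sum>n. bcn p a c n * \<beta> n))"
    by (rule sums_mult[OF B])
  have fe: "(\<lambda>r. T * (bConst p a c * (bcn p a c r * \<alpha> r / (qpoch (a * p) p r * qpoch (c * p) p r))))
    = (\<lambda>n. (\<Sum>j\<in>{-int n..int n}. (-1) powi j * (1 - q ^ (2 * n + 1)) * q powi (j\<^sup>2 - int n))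
             * (qpoch (q\<^sup>2 / a) (q\<^sup>2) n * qpoch (q\<^sup>2 / c) (q\<^sup>2) n * (a * c) ^ n)
             / (qpoch (q\<^sup>2 * a) (q\<^sup>2) n * qpoch (q\<^sup>2 * c) (q\<^sup>2) n))"
  proof
    fix n
    have S1: "(\<Sum>j\<in>{-int n..int n}. (-1) powi j * (1 - q ^ (2 * n + 1)) * q powi (j\<^sup>2 - int n))
        = (1 - q^(2*n+1)) * inverse q ^ n * St q (int n)"
    proof -
      have "St q (int n) = sum (fth q) {-int n..int n}" unfolding St_def by simp
      hence "(1 - q^(2*n+1)) * inverse q ^ n * St q (int n)
          = (\<Sum>j\<in>{-int n..int n}. (1 - q^(2*n+1)) * inverse q ^ n * fth q j)"
        by (simp add: sum_distrib_left)
      also have "\<dots> = (\<Sum>j\<in>{-int n..int n}. (-1) powi j * (1 - q ^ (2 * n + 1)) * q powi (j\<^sup>2 - int n))"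
      proof (rule sum.cong)
        fix j :: int
        have "q powi (j\<^sup>2 - int n) = q powi (j\<^sup>2) * inverse q ^ n"
          using q0 by (simp add: power_int_diff power_inverse field_simps)
        thus "(1 - q^(2*n+1)) * inverse q ^ n * fth q j = (-1) powi j * (1 - q ^ (2 * n + 1)) * q powi (j\<^sup>2 - int n)"
          unfolding fth_def by (simp add: mult_ac)
      qed simp
      finally show ?thesis by simp
    qed
    have e2: "bcn p a c n = qpoch (q\<^sup>2 / a) (q\<^sup>2) n * qpoch (q\<^sup>2 / c) (q\<^sup>2) n * (a * c) ^ n"
      unfolding bcn_def p_def ..
    show "T * (bConst p a c * (bcn p a c n * \<alpha> n / (qpoch (a * p) p n * qpoch (c * p) p n))) =
      (\<Sum>j\<in>{-int n..int n}. (-1) powi j * (1 - q ^ (2 * n + 1)) * q powi (j\<^sup>2 - int n))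
             * (qpoch (q\<^sup>2 / a) (q\<^sup>2) n * qpoch (q\<^sup>2 / c) (q\<^sup>2) n * (a * c) ^ n)
             / (qpoch (q\<^sup>2 * a) (q\<^sup>2) n * qpoch (q\<^sup>2 * c) (q\<^sup>2) n)"
    proof -
      have ea: "qpoch (a * p) p n = qpoch (q\<^sup>2 * a) (q\<^sup>2) n" "qpoch (c * p) p n = qpoch (q\<^sup>2 * c) (q\<^sup>2) n"
        by (simp_all add: p_def mult.commute)
      have al: "(1 - p) * \<alpha> n = (1 - q^(2*n+1)) * inverse q ^ n * St q (int n)"
        unfolding \<alpha>_def using p1ne by simp
      have "T * (bConst p a c * (bcn p a c n * \<alpha> n / (qpoch (a * p) p n * qpoch (c * p) p n)))
          = (T * bConst p a c) * (bcn p a c n * \<alpha> n / (qpoch (a * p) p n * qpoch (c * p) p n))"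
        by (simp only: mult.assoc)
      also have "\<dots> = ((1 - p) * \<alpha> n) * bcn p a c n / (qpoch (a * p) p n * qpoch (c * p) p n)"
        unfolding TC by (simp add: mult_ac)
      finally show ?thesis unfolding al ea S1 e2 .
    qed
  qed
  have se: "(\<Sum>n. bcn p a c n * \<beta> n) = (\<Sum>n. (qpoch (q\<^sup>2 / a) (q\<^sup>2) n * qpoch (q\<^sup>2 / c) (q\<^sup>2) n * (a * c / q) ^ n)
                 / (qpoch (- q) q (2 * n) * (1 + q ^ (2 * n + 1))))"
  proof (rule arg_cong[where f = suminf], rule ext)
    fix n
    have e: "qpoch (-q) q (2*n+1) = qpoch (- q) q (2 * n) * (1 + q ^ (2 * n + 1))"
      by (simp add: qpoch_Suc)
    show "bcn p a c n * \<beta> n = (qpoch (q\<^sup>2 / a) (q\<^sup>2) n * qpoch (q\<^sup>2 / c) (q\<^sup>2) n * (a * c / q) ^ n)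
                 / (qpoch (- q) q (2 * n) * (1 + q ^ (2 * n + 1)))"
      unfolding \<beta>_def e bcn_def p_def by (simp add: power_divide power_inverse field_simps)
  qed
  from sB have "(\<lambda>n. (\<Sum>j\<in>{-int n..int n}. (-1) powi j * (1 - q ^ (2 * n + 1)) * q powi (j\<^sup>2 - int n))
             * (qpoch (q\<^sup>2 / a) (q\<^sup>2) n * qpoch (q\<^sup>2 / c) (q\<^sup>2) n * (a * c) ^ n)
             / (qpoch (q\<^sup>2 * a) (q\<^sup>2) n * qpoch (q\<^sup>2 * c) (q\<^sup>2) n)) sums
      (T * (\<Sum>n. (qpoch (q\<^sup>2 / a) (q\<^sup>2) n * qpoch (q\<^sup>2 / c) (q\<^sup>2) n * (a * c / q) ^ n)
                 / (qpoch (- q) q (2 * n) * (1 + q ^ (2 * n + 1)))))"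
    unfolding fe se .
  hence "(\<Sum>n. (\<Sum>j\<in>{-int n..int n}. (-1) powi j * (1 - q ^ (2 * n + 1)) * q powi (j\<^sup>2 - int n))
             * (qpoch (q\<^sup>2 / a) (q\<^sup>2) n * qpoch (q\<^sup>2 / c) (q\<^sup>2) n * (a * c) ^ n)
             / (qpoch (q\<^sup>2 * a) (q\<^sup>2) n * qpoch (q\<^sup>2 * c) (q\<^sup>2) n)) =
      T * (\<Sum>n. (qpoch (q\<^sup>2 / a) (q\<^sup>2) n * qpoch (q\<^sup>2 / c) (q\<^sup>2) n * (a * c / q) ^ n)
                 / (qpoch (- q) q (2 * n) * (1 + q ^ (2 * n + 1))))"
    by (rule sums_unique[symmetric])
  thus ?thesis unfolding T_def .
qed

end
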